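(* Let $\sigma>0$, $\eta>0$, $\hat\alpha>0$, $h>0$, $r\ge0$, $a\in\mathbb{R}$, and for $\beta\ge0$ let $v_\beta$ denote the unique $C^1[0,\infty)$ solution of $\frac{\sigma^2}2v'(y)=\beta+\frac{\hat\alpha}4v(y)^2+\eta y(v(y)-\frac h\eta)-av(y)$, $y\ge0$, $v(0)=-r$. Let $\underline\beta_2=-ar-\frac{\hat\alpha r^2}4$. Then: (i) if $a>-\frac{\hat\alpha}4r$ and $\beta\ge0$, then $\beta\in\mathcal D_1$ if and only if there exists $x_0\in(0,\infty)$ with $v_\beta'(x_0)<0$; (ii) if $a\le-\frac{\hat\alpha}4r$ and $\beta>\underline\beta_2$, then $\beta\in\mathcal D_2$ if and only if there exists $x_0\in(0,\infty)$ with $v_\beta'(x_0)<0$.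
   Context: $\mathcal D_1=\{\beta\ge0:\exists x_\beta\ge0$ such that $v_\beta$ is nondecreasing on $(0,x_\beta)$ and decreasing on $(x_\beta,\infty)\}$ and $\mathcal D_2=\{\beta>\underline\beta_2:\exists x_\beta\ge0$ such that $v_\beta$ is nondecreasing on $(0,x_\beta)$ and decreasing on $(x_\beta,\infty)\}$. *)

theory Defs
  imports "HOL-Analysis.Analysis"
begin

definition is_vsol :: "real \<Rightarrow> real \<Rightarrow> real \<Rightarrow> real \<Rightarrow> real \<Rightarrow> real \<Rightarrow> real \<Rightarrow> (real \<Rightarrow> real) \<Rightarrow> bool" where
  "is_vsol \<sigma> \<eta> \<alpha> h r a \<beta> v \<longleftrightarrow>
     v 0 = - r \<and>
     (\<forall>y\<ge>0. (v has_real_derivative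
        ((2 / \<sigma>\<^sup>2) * (\<beta> + (\<alpha> / 4) * (v y)\<^sup>2 + \<eta> * y * (v y - h / \<eta>) - a * v y)))
        (at y within {0..}))"

definition up_down_shape :: "(real \<Rightarrow> real) \<Rightarrow> bool" where
  "up_down_shape v \<longleftrightarrow> (\<exists>x\<ge>0. mono_on {0<..<x} v \<and>
      (\<forall>s t. x < s \<longrightarrow> s < t \<longrightarrow> v t < v s))"

definition in_D1 :: "real \<Rightarrow> (real \<Rightarrow> real) \<Rightarrow> bool" where
  "in_D1 \<beta> v \<longleftrightarrow> \<beta> \<ge> 0 \<and> up_down_shape v"

definition beta2_low :: "real \<Rightarrow> real \<Rightarrow> real \<Rightarrow> real" where
  "beta2_low \<alpha> r a = - a * r - \<alpha> * r\<^sup>2 / 4"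

definition in_D2 :: "real \<Rightarrow> real \<Rightarrow> real \<Rightarrow> real \<Rightarrow> (real \<Rightarrow> real) \<Rightarrow> bool" where
  "in_D2 \<alpha> r a \<beta> v \<longleftrightarrow> \<beta> > beta2_low \<alpha> r a \<and> up_down_shape v"

end

theory Submission
  imports Defs
begin

lemma first_cross:
  fixes f :: "real \<Rightarrow> real"
  assumes "p < q" "continuous_on {p..q} f" "f p < 0" "f q \<ge> 0"
  shows "\<exists>z. p < z \<and> z \<le> q \<and> f z = 0 \<and> (\<forall>y. p \<le> y \<and> y < z \<longrightarrow> f y < 0)"
proof -
  define S where "S = {p..q} \<inter> f -` {0..}"
  have cl: "closed S" unfolding S_def
    by (rule continuous_closed_preimage[OF assms(2)]) auto
  have "q \<in> S" using assms unfolding S_def by auto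
  then have ne: "S \<noteq> {}" by auto
  have bb: "bdd_below S" unfolding S_def by (rule bdd_belowI[of _ p]) auto
  define z where "z = Inf S"
  have zS: "z \<in> S" unfolding z_def by (rule closed_contains_Inf[OF ne bb cl])
  have below: "f y < 0" if "p \<le> y" "y < z" for y
  proof (rule ccontr)
    assume "\<not> f y < 0"
    then have "y \<in> S" using that zS unfolding S_def by auto
    then have "z \<le> y" unfolding z_def by (rule cInf_lower[OF _ bb])
    then show False using that by simp
  qed
  have pz: "p \<le> z" "z \<le> q" "f z \<ge> 0" using zS unfolding S_def by auto
  have "z \<noteq> p" using pz assms by auto
  with pz have pz': "p < z" by simp
  have "continuous_on {p..z} f" using assms(2) pz by (auto intro: continuous_on_subset)
  from IVT'[of f p 0 z, OF _ _ _ this] pz' pz assms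
  obtain x where x: "p \<le> x" "x \<le> z" "f x = 0" by auto
  have "x = z" using below[of x] x by force
  then show ?thesis using x pz pz' below by auto
qed

lemma deriv_sign_left:
  fixes f :: "real \<Rightarrow> real"
  assumes "p < z" "f z = 0" "\<And>y. p \<le> y \<Longrightarrow> y < z \<Longrightarrow> f y < 0" "DERIV f z :> l"
  shows "l \<ge> 0"
proof (rule ccontr)
  assume "\<not> l \<ge> 0"
  then obtain d where d: "d > 0" "\<And>t. t > 0 \<Longrightarrow> t < d \<Longrightarrow> f z < f (z - t)"
    using DERIV_neg_dec_left[OF assms(4)] by force
  define t where "t = min (d/2) (z - p)"
  have "t > 0" "t < d" using d assms(1) by (auto simp: t_def)
  then have "f z < f (z - t)" using d by auto
  moreover have "f (z - t) < 0" using assms(3)[of "z - t"] \<open>t > 0\<close> by (auto simp: t_def)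
  ultimately show False using assms(2) by simp
qed

lemma mvt_le:
  fixes f f' :: "real \<Rightarrow> real"
  assumes "a \<le> b" "continuous_on {a..b} f"
    "\<And>x. a < x \<Longrightarrow> x < b \<Longrightarrow> (f has_real_derivative f' x) (at x) \<and> f' x \<ge> 0"
  shows "f a \<le> f b"
proof (cases "a = b")
  case False
  then have "a < b" using assms by simp
  from MVT[OF this assms(2)] assms(3) obtain l z where
    "a < z" "z < b" "DERIV f z :> l" "f b - f a = (b - a) * l"
    using real_differentiable_def by blast
  moreover have "l = f' z" using assms(3) calculation DERIV_unique by blast
  ultimately have "f b - f a = (b - a) * f' z" "f' z \<ge> 0" using assms(3)[of z] by auto
  then show ?thesis using \<open>a < b\<close> by (metis diff_ge_0_iff_ge less_eq_real_def zero_le_mult_iff)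
qed simp

lemma mvt_less:
  fixes f f' :: "real \<Rightarrow> real"
  assumes "a < b" "continuous_on {a..b} f"
    "\<And>x. a < x \<Longrightarrow> x < b \<Longrightarrow> (f has_real_derivative f' x) (at x) \<and> f' x > 0"
  shows "f a < f b"
proof -
  from MVT[OF assms(1,2)] assms(3) obtain l z where
    "a < z" "z < b" "DERIV f z :> l" "f b - f a = (b - a) * l"
    using real_differentiable_def by blast
  moreover have "l = f' z" using assms(3) calculation DERIV_unique by blast
  ultimately show ?thesis using assms(3)[of z] \<open>a < b\<close>
    by (metis diff_gt_0_iff_gt mult_pos_pos)
qed


definition wf :: "real \<Rightarrow> real \<Rightarrow> real \<Rightarrow> real \<Rightarrow> real \<Rightarrow> (real \<Rightarrow> real) \<Rightarrow> real \<Rightarrow> real" where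
  "wf \<eta> \<alpha> h a \<beta> v y = \<beta> + (\<alpha> / 4) * (v y)\<^sup>2 + \<eta> * y * (v y - h / \<eta>) - a * v y"

context
  fixes \<sigma> \<eta> \<alpha> h r a \<beta> :: real and v :: "real \<Rightarrow> real"
  assumes pos: "\<sigma> > 0" "\<eta> > 0" "\<alpha> > 0" "h > 0" "r \<ge> 0"
    and sol: "is_vsol \<sigma> \<eta> \<alpha> h r a \<beta> v"
begin

abbreviation "w \<equiv> wf \<eta> \<alpha> h a \<beta> v"
definition "c = 2 / \<sigma>\<^sup>2"
definition "k = h / \<eta>"

lemma c_pos: "c > 0" using pos by (simp add: c_def)
lemma k_pos: "k > 0" using pos by (simp add: k_def)

lemma v0: "v 0 = - r" using sol unfolding is_vsol_def by simp

lemma vd0: "y \<ge> 0 \<Longrightarrow> (v has_real_derivative c * w y) (at y within {0..})"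
  using sol unfolding is_vsol_def wf_def c_def by simp

lemma vd: "y > 0 \<Longrightarrow> (v has_real_derivative c * w y) (at y)"
proof -
  assume "y > 0"
  then have "at y within {0..} = at y" by (intro at_within_interior) auto
  with vd0[of y] \<open>y > 0\<close> show ?thesis by simp
qed

lemma deriv_v: "y > 0 \<Longrightarrow> deriv v y = c * w y"
  using vd DERIV_imp_deriv by blast

lemma v_cont: "continuous_on {0..} v"
  using vd0 DERIV_continuous continuous_on_eq_continuous_within by fastforce

lemma v_cont_sub: "0 \<le> a' \<Longrightarrow> continuous_on {a'..b'} v"
  using v_cont by (rule continuous_on_subset) auto

lemma w_cont: "continuous_on {0..} w"
  unfolding wf_def by (intro continuous_intros v_cont)

lemma w_cont_sub: "0 \<le> a' \<Longrightarrow> continuous_on {a'..b'} w"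
  using w_cont by (rule continuous_on_subset) auto

lemma wd: "y > 0 \<Longrightarrow> (w has_real_derivative
   (\<alpha> / 2 * v y * (c * w y) + \<eta> * (v y - k) + \<eta> * y * (c * w y) - a * (c * w y))) (at y)"
  unfolding wf_def[abs_def]
  apply (rule derivative_eq_intros vd refl | assumption)+
  using pos apply (simp add: wf_def field_simps k_def power2_eq_square)
  done

lemma no_hit_k:
  assumes z: "z > 0" "v z = k" and E0: "\<beta> + \<alpha> / 4 * k\<^sup>2 - a * k = 0"
  shows False
proof -
  define g where "g y = \<alpha> / 4 * (v y + k) + \<eta> * y - a" for y
  have wg: "w y = (v y - k) * g y" for y
  proof -
    have be: "\<beta> = a * k - \<alpha> / 4 * k\<^sup>2" using E0 by simp
    show ?thesis unfolding wf_def g_def k_def[symmetric] be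
      by (simp add: power2_eq_square field_simps)
  qed
  have gc: "continuous_on {0..z} (\<lambda>y. \<bar>g y\<bar>)"
    unfolding g_def by (intro continuous_intros v_cont_sub) auto
  obtain x0 where "x0 \<in> {0..z}" and x0: "\<And>y. y \<in> {0..z} \<Longrightarrow> \<bar>g y\<bar> \<le> \<bar>g x0\<bar>"
    using continuous_attains_sup[OF compact_Icc _ gc] z by auto
  define M where "M = \<bar>g x0\<bar>"
  define \<phi> where "\<phi> y = (v y - k)\<^sup>2 * exp (2 * c * M * y)" for y
  have "\<phi> 0 \<le> \<phi> z"
  proof (rule mvt_le[where f = \<phi> and f' = "\<lambda>y. 2 * c * (v y - k)\<^sup>2 * exp (2 * c * M * y) * (g y + M)"])
    show "0 \<le> z" using z by simp
    show "continuous_on {0..z} \<phi>" unfolding \<phi>_def by (intro continuous_intros v_cont_sub) auto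
  next
    fix y assume y: "0 < y" "y < z"
    have "(\<phi> has_real_derivative 2 * (v y - k) * (c * w y) * exp (2 * c * M * y)
        + (v y - k)\<^sup>2 * (exp (2 * c * M * y) * (2 * c * M))) (at y)"
      unfolding \<phi>_def[abs_def]
      by (rule derivative_eq_intros vd[OF y(1)] refl)+ simp
    moreover have "2 * (v y - k) * (c * w y) * exp (2 * c * M * y)
        + (v y - k)\<^sup>2 * (exp (2 * c * M * y) * (2 * c * M))
        = 2 * c * (v y - k)\<^sup>2 * exp (2 * c * M * y) * (g y + M)"
      unfolding wg by (simp add: algebra_simps power2_eq_square)
    moreover have "g y + M \<ge> 0" using x0[of y] y unfolding M_def by auto
    ultimately show "(\<phi> has_real_derivative 2 * c * (v y - k)\<^sup>2 * exp (2 * c * M * y) * (g y + M)) (at y)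
      \<and> 0 \<le> 2 * c * (v y - k)\<^sup>2 * exp (2 * c * M * y) * (g y + M)"
      using c_pos by simp
  qed
  moreover have "\<phi> z = 0" using z unfolding \<phi>_def by simp
  moreover have "\<phi> 0 > 0" using v0 k_pos pos unfolding \<phi>_def by simp
  ultimately show False by simp
qed

lemma no_blowup:
  assumes p: "p > 0" "w p > 0" "v p > k"
  shows False
proof -
  have wpos: "w y > 0" if "y \<ge> p" for y
  proof (rule ccontr)
    assume "\<not> w y > 0"
    then have q: "p < y" "- w y \<ge> 0" using that p by (auto simp: le_less)
    have "continuous_on {p..y} (\<lambda>y. - w y)" using w_cont_sub p by (intro continuous_intros) auto
    from first_cross[OF q(1) this _ q(2)] p obtain z where
      z: "p < z" "z \<le> y" "- w z = 0" "\<And>s. p \<le> s \<Longrightarrow> s < z \<Longrightarrow> - w s < 0" by auto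
    have dz: "((\<lambda>y. - w y) has_real_derivative
      - (\<alpha> / 2 * v z * (c * w z) + \<eta> * (v z - k) + \<eta> * z * (c * w z) - a * (c * w z))) (at z)"
      using wd[of z] z p by (intro derivative_intros) auto
    have "- (\<alpha> / 2 * v z * (c * w z) + \<eta> * (v z - k) + \<eta> * z * (c * w z) - a * (c * w z)) \<ge> 0"
      by (rule deriv_sign_left[OF z(1) z(3) z(4) dz])
    then have "\<eta> * (v z - k) \<le> 0" using z by simp
    moreover have "v p \<le> v z"
    proof (rule mvt_le[where f = v and f' = "\<lambda>y. c * w y"])
      show "p \<le> z" using z by simp
      show "continuous_on {p..z} v" using v_cont_sub p by simp
      fix s assume "p < s" "s < z"
      then show "(v has_real_derivative c * w s) (at s) \<and> 0 \<le> c * w s"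
        using vd[of s] p z(4)[of s] c_pos by auto
    qed
    ultimately show False using pos p by (simp add: mult_le_0_iff)
  qed
  have vmono: "v y \<ge> v p" if "y \<ge> p" for y
  proof (rule mvt_le[where f = v and f' = "\<lambda>y. c * w y"])
    show "p \<le> y" by fact
    show "continuous_on {p..y} v" using v_cont_sub p by simp
    fix s assume "p < s" "s < y"
    then show "(v has_real_derivative c * w s) (at s) \<and> 0 \<le> c * w s"
      using vd[of s] p wpos[of s] c_pos by auto
  qed
  define \<delta> where "\<delta> = v p - k"
  have \<delta>: "\<delta> > 0" using p by (simp add: \<delta>_def)
  define B where "B = \<bar>2 * a\<^sup>2 / \<alpha> - \<beta>\<bar>"
  define Y where "Y = p + B / (\<eta> * \<delta>)"
  have Yp: "Y \<ge> p" using \<delta> pos by (simp add: Y_def B_def)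
  have wbig: "w y \<ge> \<alpha> / 8 * (v y)\<^sup>2" if "y \<ge> Y" for y
  proof -
    have vy: "v y - k \<ge> \<delta>" using vmono[of y] that Yp by (simp add: \<delta>_def)
    have "\<eta> * Y * \<delta> \<ge> B"
    proof -
      have "\<eta> * Y * \<delta> = \<eta> * p * \<delta> + B" using pos \<delta> by (simp add: Y_def field_simps)
      moreover have "\<eta> * p * \<delta> \<ge> 0" using pos p \<delta> by simp
      ultimately show ?thesis by simp
    qed
    moreover have "\<eta> * y * (v y - k) \<ge> \<eta> * Y * \<delta>"
      using that vy pos \<delta> Yp p by (intro mult_mono) auto
    moreover have "\<alpha> / 8 * (v y - 4 * a / \<alpha>)\<^sup>2 \<ge> 0" using pos by simp
    moreover have "\<alpha> / 8 * (v y - 4 * a / \<alpha>)\<^sup>2 = \<alpha> / 8 * (v y)\<^sup>2 - a * v y + 2 * a\<^sup>2 / \<alpha>"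
      using pos by (simp add: field_simps power2_eq_square)
    moreover have "B \<ge> 2 * a\<^sup>2 / \<alpha> - \<beta>" by (simp add: B_def)
    ultimately show ?thesis unfolding wf_def k_def[symmetric] by linarith
  qed
  have vposY: "v y > 0" if "y \<ge> p" for y using vmono[OF that] p k_pos by simp
  define K where "K = c * \<alpha> / 8"
  have K: "K > 0" using c_pos pos by (simp add: K_def)
  define t where "t = Y + (1 / v Y) / K + 1"
  have tY: "Y < t"
  proof -
    have "(1 / v Y) / K > 0" using vposY[OF Yp] K by simp
    then show ?thesis unfolding t_def by linarith
  qed
  have "- (1 / v Y + K * Y) \<le> - (1 / v t + K * t)"
  proof (rule mvt_le[where f = "\<lambda>y. - (1 / v y + K * y)" and f' = "\<lambda>y. c * w y / (v y)\<^sup>2 - K"])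
    show "Y \<le> t" using tY by simp
    have "continuous_on {Y..t} v" using v_cont_sub Yp p by simp
    then show "continuous_on {Y..t} (\<lambda>y. - (1 / v y + K * y))"
    proof -
      have "\<forall>x\<in>{Y..t}. v x \<noteq> 0"
      proof
        fix x assume "x \<in> {Y..t}"
        then have "p \<le> x" using Yp by simp
        then show "v x \<noteq> 0" using vposY[of x] by simp
      qed
      then show ?thesis using \<open>continuous_on {Y..t} v\<close> by (intro continuous_intros) auto
    qed
  next
    fix s assume s: "Y < s" "s < t"
    have vs: "v s > 0" using vposY[of s] s Yp by simp
    have d1: "((\<lambda>y. inverse (v y)) has_real_derivative - ((c * w s) * inverse ((v s)\<^sup>2))) (at s)"
      using DERIV_inverse_fun[OF vd[of s]] vs s Yp p by (simp add: power2_eq_square)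
    have d2: "((\<lambda>y. K * y) has_real_derivative K) (at s)"
      using DERIV_cmult_Id[of K s] by simp
    have d3: "((\<lambda>y. - (inverse (v y) + K * y)) has_real_derivative
       - (- ((c * w s) * inverse ((v s)\<^sup>2)) + K)) (at s)"
      by (intro DERIV_minus DERIV_add d1 d2)
    have "(\<lambda>y. - (1 / v y + K * y)) = (\<lambda>y. - (inverse (v y) + K * y))"
      by (simp add: inverse_eq_divide)
    with d3 have "((\<lambda>y. - (1 / v y + K * y)) has_real_derivative
       - ((- (c * w s) / (v s)\<^sup>2) + K)) (at s)"
      by (simp add: inverse_eq_divide)
    moreover have "- ((- (c * w s) / (v s)\<^sup>2) + K) = c * w s / (v s)\<^sup>2 - K" by simp
    moreover have "c * w s / (v s)\<^sup>2 \<ge> K"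
    proof -
      have "c * w s \<ge> c * (\<alpha> / 8 * (v s)\<^sup>2)" using wbig[of s] s c_pos by (intro mult_left_mono) auto
      then have "c * w s \<ge> K * (v s)\<^sup>2" by (simp add: K_def)
      then show ?thesis using vs by (simp add: pos_le_divide_eq)
    qed
    ultimately show "((\<lambda>y. - (1 / v y + K * y)) has_real_derivative c * w s / (v s)\<^sup>2 - K) (at s)
       \<and> 0 \<le> c * w s / (v s)\<^sup>2 - K" by simp
  qed
  then have "1 / v t \<le> 1 / v Y - K * (t - Y)" by (simp add: algebra_simps)
  also have "\<dots> = - K" using K by (simp add: t_def field_simps)
  finally have "1 / v t \<le> - K" .
  then have "1 / v t < 0" using K by linarith
  moreover have "v t > 0" using vposY[of t] tY Yp by simp
  ultimately show False by simp
qed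

lemma stays_neg:
  assumes "0 < p" "p < q" "w p < 0"
  shows "w q < 0"
proof (rule ccontr)
  assume "\<not> w q < 0"
  then have q: "w q \<ge> 0" by simp
  from first_cross[OF assms(2) w_cont_sub assms(3) q] assms obtain z where
    z: "p < z" "z \<le> q" "w z = 0" "\<And>s. p \<le> s \<Longrightarrow> s < z \<Longrightarrow> w s < 0" by auto
  have dz: "(w has_real_derivative
      (\<alpha> / 2 * v z * (c * w z) + \<eta> * (v z - k) + \<eta> * z * (c * w z) - a * (c * w z))) (at z)"
    using wd[of z] z assms by auto
  have "(\<alpha> / 2 * v z * (c * w z) + \<eta> * (v z - k) + \<eta> * z * (c * w z) - a * (c * w z)) \<ge> 0"
    by (rule deriv_sign_left[OF z(1) z(3) z(4) dz])
  then have ge: "\<eta> * (v z - k) \<ge> 0" using z by simp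
  show False
  proof (cases "v z = k")
    case True
    have "\<beta> + \<alpha> / 4 * k\<^sup>2 - a * k = 0" using z(3) True unfolding wf_def k_def by simp
    then show False using no_hit_k[of z] z assms True by simp
  next
    case False
    then have vz: "v z > k" using ge pos by (simp add: zero_le_mult_iff)
    then have dpos: "\<alpha> / 2 * v z * (c * w z) + \<eta> * (v z - k) + \<eta> * z * (c * w z) - a * (c * w z) > 0"
      using z(3) pos by simp
    obtain d where d: "d > 0" "\<And>t. t > 0 \<Longrightarrow> t < d \<Longrightarrow> w z < w (z + t)"
      using DERIV_pos_inc_right[OF dz dpos] by blast
    define z' where "z' = z + d / 2"
    have wz': "w z' > 0" using d(2)[of "d/2"] d(1) z(3) by (simp add: z'_def)
    have "v z < v z'"
    proof (rule mvt_less[where f = v and f' = "\<lambda>y. c * w y"])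
      show "z < z'" using d by (simp add: z'_def)
      show "continuous_on {z..z'} v" using v_cont_sub z assms by simp
      fix s assume s: "z < s" "s < z'"
      have "w z < w (z + (s - z))" using s d by (intro d(2)) (auto simp: z'_def)
      then have "w s > 0" using z(3) by simp
      then show "(v has_real_derivative c * w s) (at s) \<and> 0 < c * w s"
        using vd[of s] s z assms c_pos by auto
    qed
    then show False using no_blowup[of z'] wz' vz z assms d by (simp add: z'_def)
  qed
qed

lemma shape_iff: "up_down_shape v \<longleftrightarrow> (\<exists>x0>0. deriv v x0 < 0)"
proof
  assume "up_down_shape v"
  then obtain x where x: "x \<ge> 0" "\<And>s t. x < s \<Longrightarrow> s < t \<Longrightarrow> v t < v s"
    unfolding up_down_shape_def by blast
  have lt: "v (x + 2) < v (x + 1)" using x(2)[of "x+1" "x+2"] by simp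
  have "x + 1 < x + 2" by simp
  moreover have "continuous_on {x+1..x+2} v" using x(1) by (intro v_cont_sub) simp
  moreover have "v differentiable (at y)" if "x + 1 < y" "y < x + 2" for y
  proof -
    have "y > 0" using that x(1) by simp
    then show ?thesis using vd[of y] real_differentiable_def by blast
  qed
  ultimately obtain l z where
    lz: "x + 1 < z" "z < x + 2" "DERIV v z :> l" "v (x + 2) - v (x + 1) = (x + 2 - (x + 1)) * l"
    using MVT[of "x+1" "x+2" v] by blast
  have "deriv v z = l" using lz(3) by (rule DERIV_imp_deriv)
  moreover have "z > 0" using lz(1) x(1) by simp
  ultimately show "\<exists>x0>0. deriv v x0 < 0" using lz(4) lt by (intro exI[of _ z]) auto
next
  assume "\<exists>x0>0. deriv v x0 < 0"
  then obtain x0 where x0: "x0 > 0" "deriv v x0 < 0" by blast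
  have wx0: "w x0 < 0" using x0 deriv_v[of x0] c_pos by (simp add: mult_less_0_iff)
  define T where "T = {y. 0 < y \<and> w y < 0}"
  have Tne: "x0 \<in> T" using x0 wx0 by (simp add: T_def)
  have bb: "bdd_below T" unfolding T_def by (rule bdd_belowI[of _ 0]) auto
  define x where "x = Inf T"
  have x0le: "0 \<le> x" unfolding x_def using Tne by (intro cInf_greatest) (auto simp: T_def)
  have "mono_on {0<..<x} v"
  proof (rule mono_onI)
    fix s t assume st: "s \<in> {0<..<x}" "t \<in> {0<..<x}" "s \<le> t"
    show "v s \<le> v t"
    proof (rule mvt_le[where f = v and f' = "\<lambda>y. c * w y"])
      show "s \<le> t" by fact
      show "continuous_on {s..t} v" using st by (intro v_cont_sub) auto
      fix y assume y: "s < y" "y < t"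
      have "y \<notin> T"
      proof
        assume "y \<in> T"
        then have "x \<le> y" unfolding x_def by (rule cInf_lower[OF _ bb])
        then show False using y st by auto
      qed
      then have "w y \<ge> 0" using y st by (auto simp: T_def)
      then show "(v has_real_derivative c * w y) (at y) \<and> 0 \<le> c * w y"
        using vd[of y] y st c_pos by auto
    qed
  qed
  moreover have "v t < v s" if st: "x < s" "s < t" for s t
  proof -
    obtain y0 where y0: "y0 \<in> T" "y0 < s"
      using cInf_less_iff[of T s] Tne bb st unfolding x_def by auto
    have "- v s < - v t"
    proof (rule mvt_less[where f = "\<lambda>y. - v y" and f' = "\<lambda>y. - c * w y"])
      show "s < t" by fact
      show "continuous_on {s..t} (\<lambda>y. - v y)" using st x0le by (intro continuous_intros v_cont_sub) auto
      fix y assume y: "s < y" "y < t"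
      have "w y < 0" using stays_neg[of y0 y] y0 y by (auto simp: T_def)
      then show "((\<lambda>y. - v y) has_real_derivative - c * w y) (at y) \<and> 0 < - c * w y"
        using vd[of y] y st x0le c_pos by (auto intro!: derivative_eq_intros simp: mult_less_0_iff)
    qed
    then show ?thesis by simp
  qed
  ultimately show "up_down_shape v" unfolding up_down_shape_def using x0le by blast
qed

end

theorem lemma12:
  fixes \<sigma> \<eta> \<alpha> h r a :: real
  assumes "\<sigma> > 0" "\<eta> > 0" "\<alpha> > 0" "h > 0" "r \<ge> 0"
  shows "(\<forall>\<beta> v. a > - (\<alpha> / 4) * r \<longrightarrow> \<beta> \<ge> 0 \<longrightarrow> is_vsol \<sigma> \<eta> \<alpha> h r a \<beta> v \<longrightarrow>
            (in_D1 \<beta> v \<longleftrightarrow> (\<exists>x0>0. deriv v x0 < 0)))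
       \<and> (\<forall>\<beta> v. a \<le> - (\<alpha> / 4) * r \<longrightarrow> \<beta> > beta2_low \<alpha> r a \<longrightarrow> is_vsol \<sigma> \<eta> \<alpha> h r a \<beta> v \<longrightarrow>
            (in_D2 \<alpha> r a \<beta> v \<longleftrightarrow> (\<exists>x0>0. deriv v x0 < 0)))"
  using shape_iff[OF assms] unfolding in_D1_def in_D2_def by blast

end
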